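(* There are no binary self-orthogonal codes with parameters $[45,6,22]$, $[53,6,26]$, $[60,6,30]$, $[47,7,22]$, $[71,7,34]$, $[79,7,38]$, $[93,7,46]$, $[102,7,50]$, $[109,7,54]$, $[117,7,58]$, or $[124,7,62]$.
   Context: A binary linear $[n,k,d]$ code $C$ is self-orthogonal if $C\subseteq C^\perp$ with respect to the standard inner product over $\mathbb{F}_2$. *)

theory Defs
  imports Complex_Main "HOL-Library.Z2" "HOL-Library.Function_Algebras"
begin

text \<open>Vectors over F_2 are functions nat => bit; the ambient space F_2^n is the set of
  such functions vanishing outside {0..<n}. Scalar multiplication is pointwise.\<close>

definition vscale :: "bit \<Rightarrow> (nat \<Rightarrow> bit) \<Rightarrow> (nat \<Rightarrow> bit)" where
  "vscale c v = (\<lambda>i. c * v i)"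

interpretation bv: vector_space vscale
  by unfold_locales (auto simp: vscale_def fun_eq_iff algebra_simps)

definition F2n :: "nat \<Rightarrow> (nat \<Rightarrow> bit) set" where
  "F2n n = {v. \<forall>i. n \<le> i \<longrightarrow> v i = 0}"

definition hamming_dist :: "nat \<Rightarrow> (nat \<Rightarrow> bit) \<Rightarrow> (nat \<Rightarrow> bit) \<Rightarrow> nat" where
  "hamming_dist n x y = card {i. i < n \<and> x i \<noteq> y i}"

definition min_dist :: "nat \<Rightarrow> (nat \<Rightarrow> bit) set \<Rightarrow> nat" where
  "min_dist n C = Min {hamming_dist n x y | x y. x \<in> C \<and> y \<in> C \<and> x \<noteq> y}"

definition binary_linear_code :: "nat \<Rightarrow> nat \<Rightarrow> nat \<Rightarrow> (nat \<Rightarrow> bit) set \<Rightarrow> bool" where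
  "binary_linear_code n k d C \<longleftrightarrow>
     C \<subseteq> F2n n \<and> bv.subspace C \<and> bv.dim C = k \<and> min_dist n C = d"

definition inner :: "nat \<Rightarrow> (nat \<Rightarrow> bit) \<Rightarrow> (nat \<Rightarrow> bit) \<Rightarrow> bit" where
  "inner n x y = (\<Sum>i<n. x i * y i)"

definition dual_code :: "nat \<Rightarrow> (nat \<Rightarrow> bit) set \<Rightarrow> (nat \<Rightarrow> bit) set" where
  "dual_code n C = {y \<in> F2n n. \<forall>x\<in>C. inner n x y = 0}"

definition self_orthogonal :: "nat \<Rightarrow> (nat \<Rightarrow> bit) set \<Rightarrow> bool" where
  "self_orthogonal n C \<longleftrightarrow> C \<subseteq> dual_code n C"

end

theory Submission
  imports Defs
begin

lemma card_split: "finite A \<Longrightarrow> card A = card (A - B) + card (A \<inter> B)"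
proof -
  assume f: "finite A"
  have "card ((A - B) \<union> (A \<inter> B)) = card (A - B) + card (A \<inter> B)"
    by (rule card_Un_disjoint) (use f in auto)
  moreover have "(A - B) \<union> (A \<inter> B) = A" by blast
  ultimately show ?thesis by simp
qed
lemma ar1: "(s::nat) + 2 * i = a + b \<Longrightarrow> 4 dvd a \<Longrightarrow> 4 dvd b \<Longrightarrow> even i \<Longrightarrow> 4 dvd s"
  by (elim dvdE evenE) presburger
lemma ar2: "(s::nat) + 2 * i = a + b \<Longrightarrow> even a \<Longrightarrow> \<not> 4 dvd a \<Longrightarrow> b mod 4 = 2 \<Longrightarrow> even i \<Longrightarrow> 4 dvd s"
  by (elim evenE) presburger
lemma ar3: "(d::nat) \<le> w \<Longrightarrow> 4 dvd w \<Longrightarrow> d mod 4 = 2 \<Longrightarrow> d + 2 \<le> w"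
  by presburger

lemma bit_add_self[simp]: "(x::nat\<Rightarrow>bit) + x = 0"
  by (auto simp: fun_eq_iff plus_fun_def)

lemma span_card:
  assumes "finite B" "bv.independent B"
  shows "card (bv.span B) = 2 ^ card B"
  using assms
proof (induction B rule: finite_induct)
  case empty
  then show ?case by simp
next
  case (insert b B)
  have nb: "b \<notin> bv.span B" and iB: "bv.independent B"
    using insert.prems insert.hyps bv.independent_insert by auto
  have eq: "bv.span (insert b B) = bv.span B \<union> (\<lambda>x. x + b) ` bv.span B"
  proof
    show "bv.span (insert b B) \<subseteq> bv.span B \<union> (\<lambda>x. x + b) ` bv.span B"
    proof
      fix x assume "x \<in> bv.span (insert b B)"
      then obtain c where c: "x - vscale c b \<in> bv.span B" using bv.span_breakdown_eq by blast
      show "x \<in> bv.span B \<union> (\<lambda>x. x + b) ` bv.span B"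
      proof (cases c)
        case zero
        have "vscale 0 b = 0" by (simp add: vscale_def zero_fun_def)
        then show ?thesis using c zero by simp
      next
        case one
        then have "x + b \<in> bv.span B" using c
          by (simp add: vscale_def fun_diff_def plus_fun_def)
        moreover have "x = (x + b) + b" by (simp add: add.assoc)
        ultimately show ?thesis by blast
      qed
    qed
  next
    show "bv.span B \<union> (\<lambda>x. x + b) ` bv.span B \<subseteq> bv.span (insert b B)"
      using bv.span_mono[of B "insert b B"] bv.span_add bv.span_base[of b "insert b B"] by blast
  qed
  have disj: "bv.span B \<inter> (\<lambda>x. x + b) ` bv.span B = {}"
  proof (rule ccontr)
    assume "bv.span B \<inter> (\<lambda>x. x + b) ` bv.span B \<noteq> {}"
    then obtain y where y: "y \<in> bv.span B" "y + b \<in> bv.span B" by blast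
    then have "y + (y + b) \<in> bv.span B" using bv.span_add by blast
    moreover have "y + (y + b) = b" by (simp flip: add.assoc)
    ultimately show False using nb by simp
  qed
  have fin: "finite (bv.span B)" using insert.IH iB
    by (intro card_ge_0_finite) simp
  have inj: "inj (\<lambda>x::nat\<Rightarrow>bit. x + b)" by (rule injI) simp
  have "card (bv.span (insert b B)) = card (bv.span B) + card ((\<lambda>x. x + b) ` bv.span B)"
    unfolding eq using fin disj by (simp add: card_Un_disjoint)
  also have "\<dots> = 2 * card (bv.span B)" using card_image[OF inj_on_subset[OF inj]] by simp
  finally show ?case using insert.IH iB insert.hyps by simp
qed

lemma finite_F2n: "finite (F2n n)"
proof -
  let ?f = "\<lambda>xs i. if i < length xs then xs!i else (0::bit)"
  let ?X = "{xs. set xs \<subseteq> (UNIV::bit set) \<and> length xs = n}"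
  have sub: "F2n n \<subseteq> ?f ` ?X"
  proof
    fix v assume "v \<in> F2n n"
    then have "v = ?f (map v [0..<n])"
      by (auto simp: F2n_def fun_eq_iff)
    moreover have "map v [0..<n] \<in> ?X" by simp
    ultimately show "v \<in> ?f ` ?X" by (rule image_eqI)
  qed
  have "(UNIV::bit set) \<subseteq> {0, 1}" using bit.exhaust by blast
  then have "finite (UNIV::bit set)" by (rule finite_subset) simp
  then have "finite ?X" by (rule finite_lists_length_eq)
  then show ?thesis by (rule finite_subset[OF sub finite_imageI])
qed

lemma card_code:
  assumes "C \<subseteq> F2n n" "bv.subspace C"
  shows "card C = 2 ^ bv.dim C" "finite C"
proof -
  show fC: "finite C" by (rule finite_subset[OF assms(1) finite_F2n])
  obtain B where B: "B \<subseteq> C" "bv.independent B" "C \<subseteq> bv.span B" "card B = bv.dim C"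
    using bv.basis_exists by blast
  have "bv.span B \<subseteq> C" by (rule bv.span_minimal[OF B(1) assms(2)])
  then have sB: "bv.span B = C" using B(3) by (rule antisym)
  have fB: "finite B" by (rule finite_subset[OF B(1) fC])
  show "card C = 2 ^ bv.dim C" using span_card[OF fB B(2)] B(4) sB by simp
qed

definition sp :: "nat \<Rightarrow> (nat \<Rightarrow> bit) \<Rightarrow> nat set" where
  "sp n x = {i. i < n \<and> x i \<noteq> 0}"

lemma finite_sp[simp]: "finite (sp n x)" by (simp add: sp_def)
lemma sp_sub: "sp n x \<subseteq> {..<n}" by (auto simp: sp_def)

lemma bit_add_ne0: "((a::bit) + b \<noteq> 0) = (a \<noteq> b)"
  by (cases a; cases b) auto

lemma sp_add: "sp n (x + y) = (sp n x - sp n y) \<union> (sp n y - sp n x)"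
  by (auto simp: sp_def plus_fun_def bit_add_ne0)

fun G :: "nat \<Rightarrow> nat \<Rightarrow> nat" where
  "G \<delta> 0 = \<delta>"
| "G \<delta> (Suc j) = (G \<delta> j + 1) div 2"

lemma G_num: "G d (numeral k) = (G d (pred_numeral k) + 1) div 2"
  by (simp add: numeral_eq_Suc)

lemma sym_diff_card:
  assumes "finite A" "finite Y"
  shows "card A + card ((A - Y) \<union> (Y - A)) = 2 * card (A - Y) + card Y"
proof -
  have "card ((A - Y) \<union> (Y - A)) = card (A - Y) + card (Y - A)"
    using assms by (intro card_Un_disjoint) auto
  moreover have "card A = card (A - Y) + card (A \<inter> Y)"
    using assms card_split by blast
  moreover have "card Y = card (Y - A) + card (A \<inter> Y)"
    using assms card_split[of Y A] by (simp add: Int_commute)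
  ultimately show ?thesis by simp
qed

lemma griesmer_aux:
  fixes D :: "(nat \<Rightarrow> bit) set"
  assumes fin: "finite D" and add: "\<And>x y. x \<in> D \<Longrightarrow> y \<in> D \<Longrightarrow> x + y \<in> D"
    and cD: "card D = 2 ^ m"
    and mind: "\<And>x. x \<in> D \<Longrightarrow> x \<noteq> 0 \<Longrightarrow> \<delta> \<le> card (sp n x)"
  shows "j \<le> m \<Longrightarrow> \<exists>U S. finite U \<and> card U \<le> 2 ^ j \<and> 0 \<in> U \<and> S \<subseteq> {..<n} \<and>
      (\<Sum>i<j. G \<delta> i) \<le> card S \<and> (\<forall>x\<in>D - U. G \<delta> j \<le> card (sp n x - S))"
proof (induction j)
  case 0
  show ?case
    by (rule exI[of _ "{0}"], rule exI[of _ "{}"]) (use mind in auto)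
next
  case (Suc j)
  then obtain U S where U: "finite U" "card U \<le> 2 ^ j" "0 \<in> U" "S \<subseteq> {..<n}"
     "(\<Sum>i<j. G \<delta> i) \<le> card S" "\<forall>x\<in>D - U. G \<delta> j \<le> card (sp n x - S)"
    using Suc.IH Suc.prems Suc_leD by blast
  have "(2::nat) ^ j < 2 ^ m" using Suc.prems by (simp add: power_strict_increasing)
  then have "card U < card D" using U(2) cD by linarith
  then have "\<not> D \<subseteq> U" using card_mono[OF U(1), of D] by linarith
  then have "\<exists>y. y \<in> D - U" by blast
  then obtain y where y: "y \<in> D - U" and ymin: "\<And>z. z \<in> D - U \<Longrightarrow> card (sp n y - S) \<le> card (sp n z - S)"
    using ex_has_least_nat[of "\<lambda>y. y \<in> D - U" _ "\<lambda>y. card (sp n y - S)"] by blast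
  define t where "t = card (sp n y - S)"
  have tG: "G \<delta> j \<le> t" using U(6) y t_def by blast
  define U' where "U' = U \<union> (\<lambda>u. u + y) ` U"
  define S' where "S' = S \<union> sp n y"
  show ?case
  proof (intro exI conjI)
    show "finite U'" using U(1) U'_def by simp
    have "card U' \<le> card U + card ((\<lambda>u. u + y) ` U)" unfolding U'_def by (rule card_Un_le)
    also have "\<dots> \<le> 2 * card U" using card_image_le[OF U(1), of "\<lambda>u. u + y"] by simp
    finally show "card U' \<le> 2 ^ Suc j" using U(2) by simp
    show "0 \<in> U'" using U(3) U'_def by simp
    show "S' \<subseteq> {..<n}" using U(4) sp_sub S'_def by auto
    have fS: "finite S" using U(4) finite_subset by blast
    have "card S' = card (S \<union> (sp n y - S))" by (simp only: S'_def Un_Diff_cancel)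
    also have "\<dots> = card S + t" unfolding t_def by (rule card_Un_disjoint) (use fS in auto)
    finally have "card S' = card S + t" .
    then show "(\<Sum>i<Suc j. G \<delta> i) \<le> card S'" using U(5) tG by simp
    show "\<forall>x\<in>D - U'. G \<delta> (Suc j) \<le> card (sp n x - S')"
    proof
      fix x assume x: "x \<in> D - U'"
      have xU: "x \<in> D - U" using x U'_def by auto
      have "x + y \<notin> U"
      proof
        assume "x + y \<in> U"
        then have "(x + y) + y \<in> U'" unfolding U'_def by blast
        then show False using x by (simp add: add.assoc)
      qed
      then have xyU: "x + y \<in> D - U" using add x y by auto
      define A where "A = sp n x - S"
      define Y where "Y = sp n y - S"
      have "sp n (x + y) - S = (A - Y) \<union> (Y - A)" unfolding A_def Y_def sp_add by auto
      then have e: "card A + card (sp n (x + y) - S) = 2 * card (A - Y) + t"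
        using sym_diff_card[of A Y] unfolding A_def Y_def t_def by simp
      have "t \<le> card A" using ymin xU A_def t_def by simp
      moreover have "t \<le> card (sp n (x + y) - S)" using ymin xyU t_def by simp
      ultimately have "t \<le> 2 * card (A - Y)" using e by linarith
      moreover have "A - Y = sp n x - S'" unfolding A_def Y_def S'_def by auto
      ultimately show "G \<delta> (Suc j) \<le> card (sp n x - S')" using tG by simp
    qed
  qed
qed

lemma griesmer:
  fixes D :: "(nat \<Rightarrow> bit) set"
  assumes fin: "finite D" and add: "\<And>x y. x \<in> D \<Longrightarrow> y \<in> D \<Longrightarrow> x + y \<in> D"
    and cD: "card D = 2 ^ m"
    and mind: "\<And>x. x \<in> D \<Longrightarrow> x \<noteq> 0 \<Longrightarrow> \<delta> \<le> card (sp n x)"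
  shows "(\<Sum>i<m. G \<delta> i) \<le> n"
proof -
  obtain U :: "(nat \<Rightarrow> bit) set" and S where "S \<subseteq> {..<n}" "(\<Sum>i<m. G \<delta> i) \<le> card S"
    using griesmer_aux[OF assms, of m] by auto
  then show ?thesis by (metis card_lessThan card_mono finite_lessThan le_trans)
qed


lemma of_nat_bit: "(of_nat m :: bit) = (if even m then 0 else 1)"
  by (induction m) auto

lemma bit_ne: "((a::bit) \<noteq> b) = ((a = 1) = (b = 0))" by (cases a; cases b) auto
lemma bit_mult_eq: "(a::bit) * b = (if a \<noteq> 0 \<and> b \<noteq> 0 then 1 else 0)" by (cases a; cases b) auto

lemma hd_sp: "hamming_dist n x y = card (sp n (x + y))"
  by (simp only: hamming_dist_def sp_def plus_fun_def bit_add_ne0)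

lemma inner_sp: "inner n x y = of_nat (card (sp n x \<inter> sp n y))"
proof -
  have "inner n x y = (\<Sum>i<n. if i \<in> sp n x \<inter> sp n y then 1 else 0)"
    unfolding inner_def sp_def
    by (intro sum.cong refl) (simp add: bit_mult_eq del: bit_not_zero_iff)
  also have "\<dots> = (\<Sum>i\<in>{i\<in>{..<n}. i \<in> sp n x \<inter> sp n y}. 1)"
    by (rule sum.inter_filter[symmetric]) simp
  also have "{i\<in>{..<n}. i \<in> sp n x \<inter> sp n y} = sp n x \<inter> sp n y"
    by (auto simp: sp_def)
  finally show ?thesis by simp
qed

lemma wt_add: "card (sp n (x + y)) + 2 * card (sp n x \<inter> sp n y) = card (sp n x) + card (sp n y)"
proof -
  let ?A = "sp n x" and ?B = "sp n y"
  have "card (sp n (x + y)) = card (?A - ?B) + card (?B - ?A)"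
    unfolding sp_add by (intro card_Un_disjoint) auto
  moreover have "card ?A = card (?A - ?B) + card (?A \<inter> ?B)"
    using card_split finite_sp by blast
  moreover have "card ?B = card (?B - ?A) + card (?A \<inter> ?B)"
    using card_split[of ?B ?A] by (simp add: Int_commute)
  ultimately show ?thesis by simp
qed

lemma nonex:
  assumes bl: "binary_linear_code n k d C" and so: "self_orthogonal n C"
    and d4: "d mod 4 = 2" and k1: "1 \<le> k" and big: "n < (\<Sum>i<k-1. G (d+2) i)"
  shows False
proof -
  have CF: "C \<subseteq> F2n n" and sub: "bv.subspace C" and dimC: "bv.dim C = k" and md: "min_dist n C = d"
    using bl unfolding binary_linear_code_def by auto
  have cC: "card C = 2 ^ k" and fC: "finite C" using card_code[OF CF sub] dimC by auto
  have addC: "\<And>x y. x \<in> C \<Longrightarrow> y \<in> C \<Longrightarrow> x + y \<in> C" using sub bv.subspace_add by blast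
  have zC: "0 \<in> C" using sub bv.subspace_0 by blast
  have ev: "\<And>x y. x \<in> C \<Longrightarrow> y \<in> C \<Longrightarrow> even (card (sp n x \<inter> sp n y))"
  proof -
    fix x y assume "x \<in> C" "y \<in> C"
    then have "inner n x y = 0" using so unfolding self_orthogonal_def dual_code_def by blast
    then show "even (card (sp n x \<inter> sp n y))" unfolding inner_sp of_nat_bit by (auto split: if_splits)
  qed
  define H where "H = {hamming_dist n x y | x y. x \<in> C \<and> y \<in> C \<and> x \<noteq> y}"
  have "H \<subseteq> (\<lambda>(x,y). hamming_dist n x y) ` (C \<times> C)" unfolding H_def by auto
  then have fH: "finite H" using fC finite_subset by blast
  have "(2::nat) ^ 1 \<le> 2 ^ k" using k1 by (intro power_increasing) simp_all
  then have "card C \<ge> 2" using cC by simp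
  moreover have "\<not> C \<subseteq> {0}"
  proof
    assume "C \<subseteq> {0}"
    then have "card C \<le> 1" using card_mono[of "{0}" C] by simp
    with \<open>card C \<ge> 2\<close> show False by simp
  qed
  ultimately obtain x where x: "x \<in> C" "x \<noteq> 0" by blast
  then have "H \<noteq> {}" unfolding H_def using zC by blast
  moreover have dM: "d = Min H" using md unfolding min_dist_def H_def by simp
  ultimately have dH: "d \<in> H" using fH Min_in by blast
  have dle: "\<And>h. h \<in> H \<Longrightarrow> d \<le> h" using dM fH Min_le by blast
  have mind: "\<And>x. x \<in> C \<Longrightarrow> x \<noteq> 0 \<Longrightarrow> d \<le> card (sp n x)"
  proof -
    fix x assume "x \<in> C" "x \<noteq> 0"
    then have "hamming_dist n x 0 \<in> H" unfolding H_def using zC by blast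
    then show "d \<le> card (sp n x)" using dle hd_sp[of n x 0] by simp
  qed
  obtain c0 where c0: "c0 \<in> C" "card (sp n c0) = d"
  proof -
    obtain a b where "a \<in> C" "b \<in> C" "d = hamming_dist n a b" using dH unfolding H_def by blast
    then show ?thesis using that[of "a + b"] addC hd_sp by simp
  qed
  define D where "D = {x \<in> C. 4 dvd card (sp n x)}"
  have evw: "\<And>x. x \<in> C \<Longrightarrow> even (card (sp n x))" using ev by fastforce
  have addD: "\<And>x y. x \<in> D \<Longrightarrow> y \<in> D \<Longrightarrow> x + y \<in> D"
  proof -
    fix x y assume xy: "x \<in> D" "y \<in> D"
    then have "x + y \<in> C" using addC D_def by auto
    moreover have "even (card (sp n x \<inter> sp n y))" using ev xy D_def by auto
    moreover note wt_add[of n x y]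
    ultimately show "x + y \<in> D" using xy ar1 unfolding D_def by blast
  qed
  have c0D: "c0 \<notin> D" using c0 d4 D_def by auto
  have eqC: "C = D \<union> (\<lambda>x. x + c0) ` D"
  proof
    show "D \<union> (\<lambda>x. x + c0) ` D \<subseteq> C" using addC c0 D_def by auto
    show "C \<subseteq> D \<union> (\<lambda>x. x + c0) ` D"
    proof
      fix x assume xC: "x \<in> C"
      show "x \<in> D \<union> (\<lambda>x. x + c0) ` D"
      proof (cases "x \<in> D")
        case False
        have "even (card (sp n x))" using evw xC by blast
        moreover have "even (card (sp n x \<inter> sp n c0))" using ev xC c0 by auto
        moreover note wt_add[of n x c0]
        moreover have "\<not> 4 dvd card (sp n x)" using False xC D_def by simp
        ultimately have "4 dvd card (sp n (x + c0))" using ar2 c0 d4 by blast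
        then have "x + c0 \<in> D" using xC c0 addC D_def by simp
        moreover have "x = (x + c0) + c0" by (simp add: add.assoc)
        ultimately show ?thesis by blast
      qed simp
    qed
  qed
  have disj: "D \<inter> (\<lambda>x. x + c0) ` D = {}"
  proof (rule ccontr)
    assume "D \<inter> (\<lambda>x. x + c0) ` D \<noteq> {}"
    then obtain z where z: "z \<in> D" "z + c0 \<in> D" by blast
    then have "z + (z + c0) \<in> D" using addD by blast
    moreover have "z + (z + c0) = c0" by (simp flip: add.assoc)
    ultimately show False using c0D by simp
  qed
  have fD: "finite D" using fC D_def by simp
  have inj: "inj (\<lambda>x::nat\<Rightarrow>bit. x + c0)" by (rule injI) simp
  have "card C = card D + card ((\<lambda>x. x + c0) ` D)"
    using eqC disj fD by (simp add: card_Un_disjoint)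
  also have "\<dots> = 2 * card D" using card_image[OF inj_on_subset[OF inj]] by simp
  finally have "card C = 2 * card D" .
  moreover have "(2::nat) ^ k = 2 * 2 ^ (k - 1)" using k1 by (cases k) auto
  ultimately have "card D = 2 ^ (k - 1)" using cC by simp
  moreover have "\<And>x. x \<in> D \<Longrightarrow> x \<noteq> 0 \<Longrightarrow> d + 2 \<le> card (sp n x)"
  proof -
    fix x assume "x \<in> D" "x \<noteq> 0"
    then have "d \<le> card (sp n x)" "4 dvd card (sp n x)" using mind D_def by auto
    then show "d + 2 \<le> card (sp n x)" using d4 ar3 by blast
  qed
  ultimately have "(\<Sum>i<k-1. G (d+2) i) \<le> n" using griesmer[OF fD addD] by blast
  then show False using big by simp
qed

theorem proposition6p1:
  shows "\<forall>(n, k, d) \<in> set [(45,6,22), (53,6,26), (60,6,30), (47,7,22), (71,7,34), (79,7,38),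
            (93,7,46), (102,7,50), (109,7,54), (117,7,58), (124,7,62)].
          \<not> (\<exists>C. binary_linear_code n k d C \<and> self_orthogonal n C)"
proof -
  have key: "\<And>n k d. d mod 4 = 2 \<Longrightarrow> 1 \<le> k \<Longrightarrow> n < (\<Sum>i<k-1. G (d+2) i) \<Longrightarrow>
      \<not> (\<exists>C. binary_linear_code n k d C \<and> self_orthogonal n C)"
    using nonex by blast
  have c0: "\<not> (\<exists>C. binary_linear_code 45 6 22 C \<and> self_orthogonal 45 C)"
    by (rule key) (simp_all add: lessThan_nat_numeral G_num)
  have c1: "\<not> (\<exists>C. binary_linear_code 53 6 26 C \<and> self_orthogonal 53 C)"
    by (rule key) (simp_all add: lessThan_nat_numeral G_num)
  have c2: "\<not> (\<exists>C. binary_linear_code 60 6 30 C \<and> self_orthogonal 60 C)"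
    by (rule key) (simp_all add: lessThan_nat_numeral G_num)
  have c3: "\<not> (\<exists>C. binary_linear_code 47 7 22 C \<and> self_orthogonal 47 C)"
    by (rule key) (simp_all add: lessThan_nat_numeral G_num)
  have c4: "\<not> (\<exists>C. binary_linear_code 71 7 34 C \<and> self_orthogonal 71 C)"
    by (rule key) (simp_all add: lessThan_nat_numeral G_num)
  have c5: "\<not> (\<exists>C. binary_linear_code 79 7 38 C \<and> self_orthogonal 79 C)"
    by (rule key) (simp_all add: lessThan_nat_numeral G_num)
  have c6: "\<not> (\<exists>C. binary_linear_code 93 7 46 C \<and> self_orthogonal 93 C)"
    by (rule key) (simp_all add: lessThan_nat_numeral G_num)
  have c7: "\<not> (\<exists>C. binary_linear_code 102 7 50 C \<and> self_orthogonal 102 C)"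
    by (rule key) (simp_all add: lessThan_nat_numeral G_num)
  have c8: "\<not> (\<exists>C. binary_linear_code 109 7 54 C \<and> self_orthogonal 109 C)"
    by (rule key) (simp_all add: lessThan_nat_numeral G_num)
  have c9: "\<not> (\<exists>C. binary_linear_code 117 7 58 C \<and> self_orthogonal 117 C)"
    by (rule key) (simp_all add: lessThan_nat_numeral G_num)
  have c10: "\<not> (\<exists>C. binary_linear_code 124 7 62 C \<and> self_orthogonal 124 C)"
    by (rule key) (simp_all add: lessThan_nat_numeral G_num)
  show ?thesis
    by (simp only: list.set insert_iff empty_iff ball_simps) (use c0 c1 c2 c3 c4 c5 c6 c7 c8 c9 c10 in simp)
qed

end
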